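(* Let $k$ be a field. The map sending a generic configuration of four flags $([x_m],[f_m])_{1\le m\le 4}$ in $k^3$ to the $4$-tuple $(z_{12},z_{21},z_{34},z_{43})$ of its edge coordinates induces a bijection from the set of generic configurations of four flags modulo the diagonal action of $\mathrm{PGL}(3,k)$ onto $(k\setminus\{0,1\})^4$. In other words, a tetrahedron of flags is parametrized by the $4$-tuple $(z_{12},z_{21},z_{34},z_{43})$ of elements of $k\setminus\{0,1\}$.
   Context: A flag in $V=k^3$ is a pair $([x],[f])\in\mathbb{P}(V)\times\mathbb{P}(V^* )$ with $f(x)=0$. A tetrahedron of flags (generic configuration of four flags) is an ordered $4$-tuple of flags $([x_m],[f_m])$ such that the points $[x_m]$ are pairwise distinct with no three collinear, and $f_m(x_n)\neq0$ for $m\neq n$. For distinct $i,j$, choose $k',l$ with $(1,2,3,4)\mapsto(i,j,k',l)$ an even permutation and set $z_{ij}=\frac{f_i(x_{k'})\det(x_i,x_j,x_l)}{f_i(x_l)\det(x_i,x_j,x_{k'})}$ (equivalently, the cross-ratio $[\ker f_i,(x_ix_j),(x_ix_{k'}),(x_ix_l)]$ in the pencil of lines through $[x_i]$, with the convention that the cross-ratio of $p_1,p_2,p_3,p_4$ is $\frac{(p_1-p_3)(p_2-p_4)}{(p_1-p_4)(p_2-p_3)}$). *)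

theory Defs
  imports "HOL-Analysis.Analysis"
begin

text \<open>Vectors of V = k^3 and covectors of V* are both represented as elements of 'k^3.
  The pairing of a covector f with a vector x is f(x).\<close>

definition pairing :: "'k::field ^ 3 \<Rightarrow> 'k ^ 3 \<Rightarrow> 'k" where
  "pairing f x = (\<Sum>i\<in>UNIV. f $ i * x $ i)"

definition det3 :: "'k::field ^ 3 \<Rightarrow> 'k ^ 3 \<Rightarrow> 'k ^ 3 \<Rightarrow> 'k" where
  "det3 x y z = det (vector [x, y, z] :: 'k ^ 3 ^ 3)"

text \<open>A configuration of four flags is a list of four pairs (x_m, f_m) of representatives;
  the m-th flag (m = 1..4) is at list position m - 1.\<close>

type_synonym 'k config4 = "(('k ^ 3) \<times> ('k ^ 3)) list"

definition pt :: "'k config4 \<Rightarrow> nat \<Rightarrow> 'k ^ 3" where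
  "pt F m = fst (F ! (m - 1))"

definition cv :: "'k config4 \<Rightarrow> nat \<Rightarrow> 'k ^ 3" where
  "cv F m = snd (F ! (m - 1))"

definition is_flag :: "('k::field ^ 3) \<times> ('k ^ 3) \<Rightarrow> bool" where
  "is_flag p \<longleftrightarrow> fst p \<noteq> 0 \<and> snd p \<noteq> 0 \<and> pairing (snd p) (fst p) = 0"

definition generic_config :: "'k::field config4 \<Rightarrow> bool" where
  "generic_config F \<longleftrightarrow>
     length F = 4 \<and> (\<forall>p\<in>set F. is_flag p) \<and>
     (\<forall>m\<in>{1..4}. \<forall>n\<in>{1..4}. m \<noteq> n \<longrightarrow> (\<forall>c. pt F m \<noteq> c *s pt F n)) \<and>
     (\<forall>m\<in>{1..4}. \<forall>n\<in>{1..4}. \<forall>p\<in>{1..4}. m \<noteq> n \<and> n \<noteq> p \<and> m \<noteq> p \<longrightarrow>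
        det3 (pt F m) (pt F n) (pt F p) \<noteq> 0) \<and>
     (\<forall>m\<in>{1..4}. \<forall>n\<in>{1..4}. m \<noteq> n \<longrightarrow> pairing (cv F m) (pt F n) \<noteq> 0)"

definition generic_configs :: "'k::field config4 set" where
  "generic_configs = {F. generic_config F}"

text \<open>Diagonal action of PGL(3,k) on configurations of flags, modulo rescaling of
  representatives: g.([x],[f]) = ([g x],[f \<circ> g^{-1}]).\<close>

definition pgl_equiv :: "'k::field config4 rel" where
  "pgl_equiv = {(F, G). length F = 4 \<and> length G = 4 \<and>
     (\<exists>(A :: 'k ^ 3 ^ 3) B. A ** B = mat 1 \<and> B ** A = mat 1 \<and>
       (\<forall>m\<in>{1..4}. \<exists>a b. a \<noteq> 0 \<and> b \<noteq> 0 \<and>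
          pt G m = a *s (A *v pt F m) \<and> cv G m = b *s (cv F m v* B)))}"

text \<open>Edge coordinate z_ij, where (i,j,k,l) is an even permutation of (1,2,3,4).\<close>

definition zc :: "'k::field config4 \<Rightarrow> nat \<Rightarrow> nat \<Rightarrow> nat \<Rightarrow> nat \<Rightarrow> 'k" where
  "zc F i j k l =
     (pairing (cv F i) (pt F k) * det3 (pt F i) (pt F j) (pt F l)) /
     (pairing (cv F i) (pt F l) * det3 (pt F i) (pt F j) (pt F k))"

text \<open>(z12, z21, z34, z43); the even completions are (1,2,3,4), (2,1,4,3), (3,4,1,2), (4,3,2,1).\<close>

definition edge_coords :: "'k::field config4 \<Rightarrow> 'k \<times> 'k \<times> 'k \<times> 'k" where
  "edge_coords F = (zc F 1 2 3 4, zc F 2 1 4 3, zc F 3 4 1 2, zc F 4 3 2 1)"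

end

theory Submission imports Defs begin

lemma pairing_exp: "pairing f x = f$1*x$1 + f$2*x$2 + f$3*x$3"
  by (simp add: pairing_def sum_3)

lemma det3_exp: "det3 x y z =
    x$1 * y$2 * z$3 + x$2 * y$3 * z$1 + x$3 * y$1 * z$2
  - x$1 * y$3 * z$2 - x$2 * y$1 * z$3 - x$3 * y$2 * z$1"
  by (simp add: det3_def det_3)

lemma ball14: "(\<forall>m\<in>{1..4::nat}. P m) \<longleftrightarrow> P 1 \<and> P 2 \<and> P 3 \<and> P 4"
proof -
  have "{1..4::nat} = {1,2,3,4}" by auto
  then show ?thesis by simp
qed

lemma pairing_vm: "pairing (f v* B) y = pairing f (B *v y)"
  by (simp add: pairing_def vector_matrix_mult_def matrix_vector_mult_def
      sum_distrib_left sum_distrib_right mult.assoc mult.left_commute) (rule sum.swap)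

lemma pairing_scal: "pairing (b *s f) (a *s x) = b * a * pairing f x"
  by (simp add: pairing_def sum_distrib_left mult_ac)

lemma rows_mult: "vector [A *v x, A *v y, A *v z] = (vector [x,y,z] :: 'k::field^3^3) ** transpose A"
  by (simp add: vec_eq_iff forall_3 matrix_matrix_mult_def matrix_vector_mult_def transpose_def mult.commute)

lemma det3_trans: "det3 (a *s (A *v x)) (b *s (A *v y)) (c *s (A *v z)) = a*b*c*det A * det3 x y z"
proof -
  have "det3 (A *v x) (A *v y) (A *v z) = det A * det3 x y z"
    unfolding det3_def rows_mult det_mul by simp
  moreover have "det3 (a *s u) (b *s v) (c *s w) = a*b*c*det3 u v w" for u v w :: "'a^3"
    by (simp add: det3_exp algebra_simps)
  ultimately show ?thesis by simp
qed


lemma det_inv_nz: "A ** B = mat 1 \<Longrightarrow> det (A::'k::field^3^3) \<noteq> 0"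
  by (metis det_I det_mul mult_zero_left zero_neq_one)

lemma zc_trans:
  assumes "A ** B = mat 1" "B ** A = mat 1"
    and ai: "ai \<noteq> 0" and aj: "aj \<noteq> 0" and ak: "ak \<noteq> 0" and al: "al \<noteq> 0" and bi: "bi \<noteq> 0"
    and "pt G i = ai *s (A *v pt F i)" "pt G j = aj *s (A *v pt F j)"
        "pt G k = ak *s (A *v pt F k)" "pt G l = al *s (A *v pt F l)"
        "cv G i = bi *s (cv F i v* B)"
  shows "zc G i j k l = zc F i j k l"
proof -
  have dA: "det A \<noteq> 0" using det_inv_nz assms(1) .
  have P: "pairing (cv G i) (pt G n) = bi * an * pairing (cv F i) (pt F n)"
    if "pt G n = an *s (A *v pt F n)" for n an
    using that assms(2,12) by (simp add: pairing_scal pairing_vm matrix_vector_mul_assoc)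
  define c where "c = bi * ai * aj * ak * al * det A"
  have c: "c \<noteq> 0" using assms dA by (simp add: c_def)
  have "zc G i j k l = (c * (pairing (cv F i) (pt F k) * det3 (pt F i) (pt F j) (pt F l))) /
       (c * (pairing (cv F i) (pt F l) * det3 (pt F i) (pt F j) (pt F k)))"
    unfolding zc_def using assms(8-11) P[OF assms(10)] P[OF assms(11)]
    by (simp add: det3_trans c_def mult_ac)
  also have "\<dots> = zc F i j k l" using c by (simp add: zc_def)
  finally show ?thesis .
qed

lemma resp: assumes "(F,G) \<in> pgl_equiv" shows "edge_coords F = edge_coords G"
proof -
  from assms obtain A B where AB: "A ** B = mat 1" "B ** A = mat 1" and
    H: "\<forall>m\<in>{1..4}. \<exists>a b. a \<noteq> 0 \<and> b \<noteq> 0 \<and>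
          pt G m = a *s (A *v pt F m) \<and> cv G m = b *s (cv F m v* B)"
    unfolding pgl_equiv_def by auto
  from H[unfolded ball14] obtain a1 b1 where 1: "a1 \<noteq> 0" "b1 \<noteq> 0" "pt G 1 = a1 *s (A *v pt F 1)" "cv G 1 = b1 *s (cv F 1 v* B)" by blast
  from H[unfolded ball14] obtain a2 b2 where 2: "a2 \<noteq> 0" "b2 \<noteq> 0" "pt G 2 = a2 *s (A *v pt F 2)" "cv G 2 = b2 *s (cv F 2 v* B)" by blast
  from H[unfolded ball14] obtain a3 b3 where 3: "a3 \<noteq> 0" "b3 \<noteq> 0" "pt G 3 = a3 *s (A *v pt F 3)" "cv G 3 = b3 *s (cv F 3 v* B)" by blast
  from H[unfolded ball14] obtain a4 b4 where 4: "a4 \<noteq> 0" "b4 \<noteq> 0" "pt G 4 = a4 *s (A *v pt F 4)" "cv G 4 = b4 *s (cv F 4 v* B)" by blast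
  have "zc G 1 2 3 4 = zc F 1 2 3 4" by (rule zc_trans[OF AB 1(1) 2(1) 3(1) 4(1) 1(2) 1(3) 2(3) 3(3) 4(3) 1(4)])
  moreover have "zc G 2 1 4 3 = zc F 2 1 4 3" by (rule zc_trans[OF AB 2(1) 1(1) 4(1) 3(1) 2(2) 2(3) 1(3) 4(3) 3(3) 2(4)])
  moreover have "zc G 3 4 1 2 = zc F 3 4 1 2" by (rule zc_trans[OF AB 3(1) 4(1) 1(1) 2(1) 3(2) 3(3) 4(3) 1(3) 2(3) 3(4)])
  moreover have "zc G 4 3 2 1 = zc F 4 3 2 1" by (rule zc_trans[OF AB 4(1) 3(1) 2(1) 1(1) 4(2) 4(3) 3(3) 2(3) 1(3) 4(4)])
  ultimately show ?thesis unfolding edge_coords_def by simp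
qed


lemma scal_vm: "(c *s f) v* (B::'k::field^3^3) = c *s (f v* B)"
  by (rule scalar_vector_matrix_assoc)

lemma pgl_refl: "length F = 4 \<Longrightarrow> (F, F) \<in> (pgl_equiv :: 'k::field config4 rel)"
  unfolding pgl_equiv_def
  by (auto intro!: exI[of _ "mat 1"] exI[of _ "1::'k"])

lemma pgl_sym: assumes "(F,G) \<in> (pgl_equiv :: 'k::field config4 rel)" shows "(G,F) \<in> pgl_equiv"
proof -
  from assms obtain A B where AB: "A ** B = mat 1" "B ** A = mat 1" and L: "length F = 4" "length G = 4" and
    H: "\<forall>m\<in>{1..4}. \<exists>a b. a \<noteq> 0 \<and> b \<noteq> 0 \<and>
          pt G m = a *s (A *v pt F m) \<and> cv G m = b *s (cv F m v* B)"
    unfolding pgl_equiv_def by auto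
  have "\<exists>a b. a \<noteq> 0 \<and> b \<noteq> 0 \<and> pt F m = a *s (B *v pt G m) \<and> cv F m = b *s (cv G m v* A)"
    if m: "m \<in> {1..4}" for m
  proof -
    from H m obtain a b where ab: "a \<noteq> 0" "b \<noteq> 0" "pt G m = a *s (A *v pt F m)" "cv G m = b *s (cv F m v* B)" by blast
    have "B *v pt G m = a *s pt F m"
      using ab AB by (simp add: vector_scalar_commute matrix_vector_mul_assoc)
    moreover have "cv G m v* A = b *s cv F m"
      using ab AB by (simp add: scal_vm vector_matrix_mul_assoc)
    ultimately show ?thesis using ab
      by (intro exI[of _ "inverse a"] exI[of _ "inverse b"]) (simp add: vector_smult_assoc)
  qed
  then show ?thesis unfolding pgl_equiv_def using AB L by blast
qed

lemma pgl_trans: assumes "(F,G) \<in> (pgl_equiv :: 'k::field config4 rel)" "(G,H) \<in> pgl_equiv" shows "(F,H) \<in> pgl_equiv"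
proof -
  from assms(1) obtain A B where AB: "A ** B = mat 1" "B ** A = mat 1" and L: "length F = 4" "length G = 4" and
    H1: "\<forall>m\<in>{1..4}. \<exists>a b. a \<noteq> 0 \<and> b \<noteq> 0 \<and>
          pt G m = a *s (A *v pt F m) \<and> cv G m = b *s (cv F m v* B)"
    unfolding pgl_equiv_def by auto
  from assms(2) obtain A' B' where AB': "A' ** B' = mat 1" "B' ** A' = mat 1" and L': "length H = 4" and
    H2: "\<forall>m\<in>{1..4}. \<exists>a b. a \<noteq> 0 \<and> b \<noteq> 0 \<and>
          pt H m = a *s (A' *v pt G m) \<and> cv H m = b *s (cv G m v* B')"
    unfolding pgl_equiv_def by auto
  have I1: "(A' ** A) ** (B ** B') = mat 1" using AB AB'
    by (metis matrix_mul_assoc matrix_mul_lid)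
  have I2: "(B ** B') ** (A' ** A) = mat 1" using AB AB'
    by (metis matrix_mul_assoc matrix_mul_lid)
  have "\<exists>a b. a \<noteq> 0 \<and> b \<noteq> 0 \<and> pt H m = a *s ((A' ** A) *v pt F m) \<and> cv H m = b *s (cv F m v* (B ** B'))"
    if m: "m \<in> {1..4}" for m
  proof -
    from H1 m obtain a b where ab: "a \<noteq> 0" "b \<noteq> 0" "pt G m = a *s (A *v pt F m)" "cv G m = b *s (cv F m v* B)" by blast
    from H2 m obtain a' b' where ab': "a' \<noteq> 0" "b' \<noteq> 0" "pt H m = a' *s (A' *v pt G m)" "cv H m = b' *s (cv G m v* B')" by blast
    show ?thesis using ab ab'
      by (intro exI[of _ "a' * a"] exI[of _ "b' * b"])
        (simp add: vector_scalar_commute matrix_vector_mul_assoc scal_vm vector_matrix_mul_assoc vector_smult_assoc)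
  qed
  then show ?thesis unfolding pgl_equiv_def using I1 I2 L L' by blast
qed


definition stdc :: "'k::field \<times> 'k \<times> 'k \<times> 'k \<Rightarrow> 'k config4" where
  "stdc z = (case z of (z1,z2,z3,z4) \<Rightarrow>
     [(vector[1,0,0], vector[0,1-z1,z1]), (vector[0,1,0], vector[z2-1,0,1]),
      (vector[0,0,1], vector[-z3,1,0]), (vector[1,1,1], vector[1,-z4,z4-1])])"

lemma pt_std:
  "pt (stdc (z1,z2,z3,z4)) 1 = vector[1,0,0]" "pt (stdc (z1,z2,z3,z4)) 2 = vector[0,1,0]"
  "pt (stdc (z1,z2,z3,z4)) 3 = vector[0,0,1]" "pt (stdc (z1,z2,z3,z4)) 4 = vector[1,1,1]"
  "cv (stdc (z1,z2,z3,z4)) 1 = vector[0,1-z1,z1]" "cv (stdc (z1,z2,z3,z4)) 2 = vector[z2-1,0,1]"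
  "cv (stdc (z1,z2,z3,z4)) 3 = vector[-z3,1,0]" "cv (stdc (z1,z2,z3,z4)) 4 = vector[1,-z4,z4-1]"
  by (simp_all add: stdc_def pt_def cv_def)

lemma std_coords: "edge_coords (stdc (z1,z2,z3,z4)) = (z1,z2,z3,z4)"
  unfolding edge_coords_def zc_def pt_std by (simp add: pairing_exp det3_exp)

lemma std_generic:
  assumes "z1 \<notin> {0,1}" "z2 \<notin> {0,1}" "z3 \<notin> {0,1}" "z4 \<notin> {0,1}"
  shows "generic_config (stdc (z1,z2,z3,z4))"
proof -
  have b4: "\<And>P. (\<forall>m\<in>{1..4::nat}. P m) \<longleftrightarrow> P 1 \<and> P 2 \<and> P 3 \<and> P 4" by (rule ball14)
  have "z4 - 1 \<noteq> 0" "z2 - 1 \<noteq> 0" "1 - z1 \<noteq> 0" "1 - z3 \<noteq> 0" using assms by auto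
  then show ?thesis using assms
  unfolding generic_config_def b4 pt_std
  by (simp add: stdc_def is_flag_def vec_eq_iff forall_3 pairing_exp det3_exp)
qed


lemma gen_facts:
  assumes "generic_config (F :: 'k::field config4)"
  shows "\<And>m. m \<in> {1..4} \<Longrightarrow> pairing (cv F m) (pt F m) = 0"
    and "\<And>m n. m \<in> {1..4} \<Longrightarrow> n \<in> {1..4} \<Longrightarrow> m \<noteq> n \<Longrightarrow> pairing (cv F m) (pt F n) \<noteq> 0"
    and "\<And>m n p. m \<in> {1..4} \<Longrightarrow> n \<in> {1..4} \<Longrightarrow> p \<in> {1..4} \<Longrightarrow> m \<noteq> n \<Longrightarrow> n \<noteq> p \<Longrightarrow> m \<noteq> p \<Longrightarrow>
        det3 (pt F m) (pt F n) (pt F p) \<noteq> 0"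
    and "length F = 4"
proof -
  fix m :: nat assume m: "m \<in> {1..4}"
  have "F ! (m - 1) \<in> set F" using m assms by (auto simp: generic_config_def)
  then show "pairing (cv F m) (pt F m) = 0" using assms
    by (auto simp: generic_config_def is_flag_def pt_def cv_def)
qed (use assms in \<open>auto simp: generic_config_def\<close>)

lemma norm_ex:
  assumes gen: "generic_config (F :: 'k::field config4)"
  shows "\<exists>z1 z2 z3 z4. z1 \<notin> {0,1} \<and> z2 \<notin> {0,1} \<and> z3 \<notin> {0,1} \<and> z4 \<notin> {0,1} \<and>
     (F, stdc (z1,z2,z3,z4)) \<in> pgl_equiv"
proof -
  note G = gen_facts[OF gen]
  define x1 where "x1 = pt F 1"
  define x2 where "x2 = pt F 2"
  define x3 where "x3 = pt F 3"
  define x4 where "x4 = pt F 4"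
  define D where "D = det3 x1 x2 x3"
  have D: "D \<noteq> 0" unfolding D_def x1_def x2_def x3_def by (rule G(3)) auto
  define l1 where "l1 = det3 x4 x2 x3 / D"
  define l2 where "l2 = det3 x1 x4 x3 / D"
  define l3 where "l3 = det3 x1 x2 x4 / D"
  have l1: "l1 \<noteq> 0" unfolding l1_def using D G(3)[of 4 2 3] by (simp add: x2_def x3_def x4_def)
  have l2: "l2 \<noteq> 0" unfolding l2_def using D G(3)[of 1 4 3] by (simp add: x1_def x3_def x4_def)
  have l3: "l3 \<noteq> 0" unfolding l3_def using D G(3)[of 1 2 4] by (simp add: x1_def x2_def x4_def)
  have cr0: "D *s x4 = det3 x4 x2 x3 *s x1 + det3 x1 x4 x3 *s x2 + det3 x1 x2 x4 *s x3"
    unfolding D_def by (simp add: vec_eq_iff forall_3 det3_exp algebra_simps)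
  have cr: "x4 = l1 *s x1 + l2 *s x2 + l3 *s x3"
  proof -
    have "x4 = inverse D *s (D *s x4)" using D by (simp add: vector_smult_assoc)
    also have "\<dots> = l1 *s x1 + l2 *s x2 + l3 *s x3" unfolding cr0 l1_def l2_def l3_def
      by (simp add: vec_eq_iff forall_3 field_simps)
    finally show ?thesis .
  qed
  define B :: "'k^3^3" where "B = transpose (vector [l1 *s x1, l2 *s x2, l3 *s x3])"
  have detB: "det B = l1 * l2 * l3 * D"
    unfolding B_def det_transpose D_def det3_def[symmetric] by (simp add: det3_exp algebra_simps)
  have "invertible B" using detB D l1 l2 l3 by (simp add: invertible_det_nz)
  then obtain A where AB: "A ** B = mat 1" "B ** A = mat 1" unfolding invertible_def by blast
  have Bv: "B *v v = v$1 *s (l1 *s x1) + v$2 *s (l2 *s x2) + v$3 *s (l3 *s x3)" for v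
    unfolding B_def by (simp add: vec_eq_iff forall_3 matrix_vector_mult_def sum_3 transpose_def mult.commute)
  have Av: "A *v (B *v v) = v" for v using AB by (simp add: matrix_vector_mul_assoc)
  have p1: "vector[1,0,0] = l1 *s (A *v x1)"
    using Av[of "vector[1,0,0]"] by (simp add: Bv vector_scalar_commute)
  have p2: "vector[0,1,0] = l2 *s (A *v x2)"
    using Av[of "vector[0,1,0]"] by (simp add: Bv vector_scalar_commute)
  have p3: "vector[0,0,1] = l3 *s (A *v x3)"
    using Av[of "vector[0,0,1]"] by (simp add: Bv vector_scalar_commute)
  have p4: "vector[1,1,1] = 1 *s (A *v x4)"
    using Av[of "vector[1,1,1]"] by (simp add: Bv cr)
  have g: "f v* B = vector [l1 * pairing f x1, l2 * pairing f x2, l3 * pairing f x3]" for f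
    unfolding B_def by (simp add: vec_eq_iff forall_3 vector_matrix_mult_def sum_3 transpose_def pairing_exp algebra_simps)
  have lin: "pairing f x4 = l1 * pairing f x1 + l2 * pairing f x2 + l3 * pairing f x3" for f
    unfolding cr by (simp add: pairing_exp algebra_simps)
  define f1 where "f1 = cv F 1"
  define f2 where "f2 = cv F 2"
  define f3 where "f3 = cv F 3"
  define f4 where "f4 = cv F 4"
  have Z: "pairing f1 x1 = 0" "pairing f2 x2 = 0" "pairing f3 x3 = 0" "pairing f4 x4 = 0"
    using G(1)[of 1] G(1)[of 2] G(1)[of 3] G(1)[of 4]
    by (simp_all add: f1_def f2_def f3_def f4_def x1_def x2_def x3_def x4_def)
  have NZ: "pairing f1 x2 \<noteq> 0" "pairing f1 x3 \<noteq> 0" "pairing f1 x4 \<noteq> 0"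
     "pairing f2 x1 \<noteq> 0" "pairing f2 x3 \<noteq> 0" "pairing f2 x4 \<noteq> 0"
     "pairing f3 x1 \<noteq> 0" "pairing f3 x2 \<noteq> 0" "pairing f3 x4 \<noteq> 0"
     "pairing f4 x1 \<noteq> 0" "pairing f4 x2 \<noteq> 0" "pairing f4 x3 \<noteq> 0"
    using G(2)[of 1 2] G(2)[of 1 3] G(2)[of 1 4] G(2)[of 2 1] G(2)[of 2 3] G(2)[of 2 4]
      G(2)[of 3 1] G(2)[of 3 2] G(2)[of 3 4] G(2)[of 4 1] G(2)[of 4 2] G(2)[of 4 3]
    by (simp_all add: f1_def f2_def f3_def f4_def x1_def x2_def x3_def x4_def)
  define z1 where "z1 = l3 * pairing f1 x3 / pairing f1 x4"
  define z2 where "z2 = 1 + l1 * pairing f2 x1 / (l3 * pairing f2 x3)"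
  define z3 where "z3 = - (l1 * pairing f3 x1 / (l2 * pairing f3 x2))"
  define z4 where "z4 = - (l2 * pairing f4 x2 / (l1 * pairing f4 x1))"
  have zs: "z1 \<notin> {0,1}" "z2 \<notin> {0,1}" "z3 \<notin> {0,1}" "z4 \<notin> {0,1}"
  proof -
    show "z1 \<notin> {0,1}" using lin[of f1] Z NZ l1 l2 l3 by (auto simp: z1_def field_simps)
    show "z2 \<notin> {0,1}" using lin[of f2] Z NZ l1 l2 l3 by (auto simp: z2_def field_simps)
    show "z3 \<notin> {0,1}" using lin[of f3] Z NZ l1 l2 l3 by (auto simp: z3_def field_simps neg_eq_iff_add_eq_0)
    show "z4 \<notin> {0,1}" using lin[of f4] Z NZ l1 l2 l3 apply (auto simp: z4_def field_simps neg_eq_iff_add_eq_0)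
      by (metis add.assoc add_0 mult_eq_0_iff)
  qed
  have e1: "l2 * pairing f1 x2 = pairing f1 x4 - l3 * pairing f1 x3" using lin[of f1] Z by simp
  have e4: "l3 * pairing f4 x3 = - (l1 * pairing f4 x1 + l2 * pairing f4 x2)" using lin[of f4] Z
    by (simp add: algebra_simps) (metis add.assoc add.commute add_diff_cancel_left' diff_0 diff_add_cancel minus_diff_eq)
  have e1': "pairing f1 x2 = (pairing f1 x4 - l3 * pairing f1 x3) / l2" using e1 l2 by (simp add: field_simps)
  have e4': "pairing f4 x3 = (- (l1 * pairing f4 x1 + l2 * pairing f4 x2)) / l3" using e4 l3 by (simp add: field_simps)
  have c1: "cv (stdc (z1,z2,z3,z4)) 1 = inverse (pairing f1 x4) *s (f1 v* B)"
    using Z NZ(2,3) l1 l2 l3 unfolding g pt_std by (simp add: vec_eq_iff forall_3 z1_def e1' field_simps)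
  have c2: "cv (stdc (z1,z2,z3,z4)) 2 = inverse (l3 * pairing f2 x3) *s (f2 v* B)"
    using Z NZ l1 l2 l3 unfolding g pt_std by (simp add: vec_eq_iff forall_3 z2_def field_simps)
  have c3: "cv (stdc (z1,z2,z3,z4)) 3 = inverse (l2 * pairing f3 x2) *s (f3 v* B)"
    using Z NZ l1 l2 l3 unfolding g pt_std by (simp add: vec_eq_iff forall_3 z3_def field_simps)
  have c4: "cv (stdc (z1,z2,z3,z4)) 4 = inverse (l1 * pairing f4 x1) *s (f4 v* B)"
    using Z NZ(10,11) l1 l2 l3 unfolding g pt_std by (simp add: vec_eq_iff forall_3 z4_def e4' field_simps)
  have "(F, stdc (z1,z2,z3,z4)) \<in> pgl_equiv"
  proof -
    have len: "length (stdc (z1,z2,z3,z4)) = 4" by (simp add: stdc_def)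
    have i1: "inverse (pairing f1 x4) \<noteq> 0" "inverse (l3 * pairing f2 x3) \<noteq> 0"
      "inverse (l2 * pairing f3 x2) \<noteq> 0" "inverse (l1 * pairing f4 x1) \<noteq> 0"
      using NZ l1 l2 l3 by auto
    define S where "S = stdc (z1,z2,z3,z4)"
    have q1: "\<exists>a b. a \<noteq> 0 \<and> b \<noteq> 0 \<and> pt S 1 = a *s (A *v pt F 1) \<and> cv S 1 = b *s (cv F 1 v* B)"
      unfolding S_def c1 apply (rule exI[of _ l1], rule exI[of _ "inverse (pairing f1 x4)"])
      unfolding pt_std using l1 i1(1) p1 by (simp add: x1_def f1_def)
    have q2: "\<exists>a b. a \<noteq> 0 \<and> b \<noteq> 0 \<and> pt S 2 = a *s (A *v pt F 2) \<and> cv S 2 = b *s (cv F 2 v* B)"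
      unfolding S_def c2 apply (rule exI[of _ l2], rule exI[of _ "inverse (l3 * pairing f2 x3)"])
      unfolding pt_std using l2 i1(2) p2 by (simp add: x2_def f2_def)
    have q3: "\<exists>a b. a \<noteq> 0 \<and> b \<noteq> 0 \<and> pt S 3 = a *s (A *v pt F 3) \<and> cv S 3 = b *s (cv F 3 v* B)"
      unfolding S_def c3 apply (rule exI[of _ l3], rule exI[of _ "inverse (l2 * pairing f3 x2)"])
      unfolding pt_std using l3 i1(3) p3 by (simp add: x3_def f3_def)
    have q4: "\<exists>a b. a \<noteq> 0 \<and> b \<noteq> 0 \<and> pt S 4 = a *s (A *v pt F 4) \<and> cv S 4 = b *s (cv F 4 v* B)"
      unfolding S_def c4 apply (rule exI[of _ 1], rule exI[of _ "inverse (l1 * pairing f4 x1)"])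
      unfolding pt_std using i1(4) p4 by (simp add: x4_def f4_def)
    have "\<forall>m\<in>{1..4}. \<exists>a b. a \<noteq> 0 \<and> b \<noteq> 0 \<and>
          pt S m = a *s (A *v pt F m) \<and> cv S m = b *s (cv F m v* B)"
      unfolding ball14 using q1 q2 q3 q4 by (intro conjI)
    then show ?thesis unfolding pgl_equiv_def S_def using AB len G(4) by blast
  qed
  then show ?thesis using zs by blast
qed


lemma norm_coords:
  assumes "generic_config (F :: 'k::field config4)"
  shows "edge_coords F \<in> (UNIV - {0,1}) \<times> (UNIV - {0,1}) \<times> (UNIV - {0,1}) \<times> (UNIV - {0,1})"
    and "(F, stdc (edge_coords F)) \<in> pgl_equiv"
proof -
  obtain z1 z2 z3 z4 where z: "z1 \<notin> {0,1}" "z2 \<notin> {0,1}" "z3 \<notin> {0,1}" "z4 \<notin> {0,1}"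
    and r: "(F, stdc (z1,z2,z3,z4)) \<in> pgl_equiv" using norm_ex[OF assms] by blast
  have e: "edge_coords F = (z1,z2,z3,z4)" using resp[OF r] std_coords by simp
  show "edge_coords F \<in> (UNIV - {0,1}) \<times> (UNIV - {0,1}) \<times> (UNIV - {0,1}) \<times> (UNIV - {0,1})"
    using z e by simp
  show "(F, stdc (edge_coords F)) \<in> pgl_equiv" using r e by simp
qed

lemma cls_img: "generic_config F \<Longrightarrow> edge_coords ` (pgl_equiv``{F}) = {edge_coords F}"
  using pgl_refl[OF gen_facts(4)] resp by fastforce

theorem mainTheorem2:
  fixes k_type :: "'k::field itself"
  defines "S \<equiv> UNIV - {0, 1 :: 'k}"
  shows "edge_coords respects (pgl_equiv :: 'k config4 rel) \<and>
         bij_betw (\<lambda>X. the_elem (edge_coords ` X))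
           ((generic_configs :: 'k config4 set) // pgl_equiv) (S \<times> S \<times> S \<times> S)"
proof
  show "edge_coords respects (pgl_equiv :: 'k config4 rel)"
    unfolding congruent_def using resp by blast
  have te: "the_elem (edge_coords ` (pgl_equiv``{F})) = edge_coords F" if "generic_config F" for F :: "'k config4"
    using cls_img[OF that] by simp
  show "bij_betw (\<lambda>X. the_elem (edge_coords ` X))
           ((generic_configs :: 'k config4 set) // pgl_equiv) (S \<times> S \<times> S \<times> S)"
    unfolding bij_betw_def
  proof
    show "inj_on (\<lambda>X. the_elem (edge_coords ` X)) ((generic_configs :: 'k config4 set) // pgl_equiv)"
    proof (rule inj_onI)
      fix X Y assume X: "X \<in> (generic_configs :: 'k config4 set) // pgl_equiv" and Y: "Y \<in> (generic_configs :: 'k config4 set) // pgl_equiv"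
        and eq: "the_elem (edge_coords ` X) = the_elem (edge_coords ` Y)"
      from X obtain F where F: "generic_config F" "X = pgl_equiv``{F}"
        by (auto elim!: quotientE simp: generic_configs_def)
      from Y obtain G where G: "generic_config G" "Y = pgl_equiv``{G}"
        by (auto elim!: quotientE simp: generic_configs_def)
      have ec: "edge_coords F = edge_coords G" using eq F G te by simp
      have FG: "(F, G) \<in> pgl_equiv"
        using norm_coords(2)[OF F(1)] norm_coords(2)[OF G(1)] ec pgl_sym pgl_trans by metis
      show "X = Y" unfolding F G using FG pgl_sym pgl_trans by blast
    qed
    show "(\<lambda>X. the_elem (edge_coords ` X)) ` ((generic_configs :: 'k config4 set) // pgl_equiv) = S \<times> S \<times> S \<times> S"
    proof
      show "(\<lambda>X. the_elem (edge_coords ` X)) ` ((generic_configs :: 'k config4 set) // pgl_equiv) \<subseteq> S \<times> S \<times> S \<times> S"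
      proof
        fix z assume "z \<in> (\<lambda>X. the_elem (edge_coords ` X)) ` ((generic_configs :: 'k config4 set) // pgl_equiv)"
        then obtain F where F: "generic_config F" "z = the_elem (edge_coords ` (pgl_equiv``{F}))"
          by (auto elim!: quotientE simp: generic_configs_def)
        show "z \<in> S \<times> S \<times> S \<times> S" using F te norm_coords(1)[OF F(1)] by (simp add: S_def)
      qed
      show "S \<times> S \<times> S \<times> S \<subseteq> (\<lambda>X. the_elem (edge_coords ` X)) ` ((generic_configs :: 'k config4 set) // pgl_equiv)"
      proof
        fix z assume z: "z \<in> S \<times> S \<times> S \<times> S"
        then obtain z1 z2 z3 z4 where zz: "z = (z1,z2,z3,z4)" "z1 \<notin> {0,1}" "z2 \<notin> {0,1}" "z3 \<notin> {0,1}" "z4 \<notin> {0,1}"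
          by (auto simp: S_def)
        have g: "generic_config (stdc (z1,z2,z3,z4))" using std_generic zz by blast
        have "pgl_equiv``{stdc (z1,z2,z3,z4)} \<in> (generic_configs :: 'k config4 set) // pgl_equiv"
          using g by (auto intro: quotientI simp: generic_configs_def)
        moreover have "the_elem (edge_coords ` (pgl_equiv``{stdc (z1,z2,z3,z4)})) = z"
          using te[OF g] std_coords zz by simp
        ultimately show "z \<in> (\<lambda>X. the_elem (edge_coords ` X)) ` ((generic_configs :: 'k config4 set) // pgl_equiv)"
          by (metis image_eqI)
      qed
    qed
  qed
qed

end
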